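(* Let $h, j_2\in\mathbb{R}$ with $j_2\neq 0$, and suppose the cubic $P(z)=-2z^3+2z^2+2hz-\frac{j_2^2}{2}$ has three distinct real roots $z_1<z_2<z_3$ (then $z_1<0<z_2<z_3$). Define $$I_1(h,j_2)=\frac{\sqrt2}{2\pi}\int_{z_2}^{z_3}\frac{\sqrt{P(z)}}{z}\,dz .$$ Then $$2\pi I_1(h,j_2)=g_1K(\kappa)+g_2E(\kappa)+g_3\Pi(n,\kappa),$$ where $$g_1=\frac{4(2h+z_1)}{3\sqrt{z_3-z_1}},\quad g_2=\frac{4\sqrt{z_3-z_1}}{3},\quad g_3=-\frac{j_2^2}{z_3\sqrt{z_3-z_1}},\qquad \kappa^2=\frac{z_3-z_2}{z_3-z_1},\quad n=\frac{z_3-z_2}{z_3}.$$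
   Context: Setting: the champagne bottle Hamiltonian $H=\frac12(y_1^2+y_2^2)-(x_1^2+x_2^2)+(x_1^2+x_2^2)^2$ in polar coordinates reads $H=\frac12(p_r^2+p_\varphi^2/r^2)+r^4-r^2$, with angular momentum $p_\varphi$. For energy $h$ and angular momentum value $\ell$, the quantities above are the rescaled ones: $j_2=\sqrt2\,\ell$ and $I_1=\sqrt2\cdot\frac{1}{2\pi}\oint p_r\,dr$ (the radial action, computed with $z=r^2$), which equals $\frac{\sqrt2}{4\pi}\oint_\beta \frac{w}{z}dz$ over the real oval $\beta$ of $w^2=P(z)$ encircling $[z_2,z_3]$. $K(\kappa)=\int_0^{\pi/2}\frac{dt}{\sqrt{1-\kappa^2\sin^2t}}$, $E(\kappa)=\int_0^{\pi/2}\sqrt{1-\kappa^2\sin^2 t}\,dt$, $\Pi(n,\kappa)=\int_0^{\pi/2}\frac{dt}{(1-n\sin^2t)\sqrt{1-\kappa^2\sin^2t}}$ are the complete elliptic integrals of the first, second and third kind in Legendre form. *)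

theory Defs
  imports "HOL-Analysis.Analysis"
begin

definition ellK :: "real \<Rightarrow> real" where
  "ellK \<kappa> = integral {0..pi/2} (\<lambda>t. 1 / sqrt (1 - \<kappa>\<^sup>2 * (sin t)\<^sup>2))"

definition ellE :: "real \<Rightarrow> real" where
  "ellE \<kappa> = integral {0..pi/2} (\<lambda>t. sqrt (1 - \<kappa>\<^sup>2 * (sin t)\<^sup>2))"

definition ellPi :: "real \<Rightarrow> real \<Rightarrow> real" where
  "ellPi n \<kappa> = integral {0..pi/2}
     (\<lambda>t. 1 / ((1 - n * (sin t)\<^sup>2) * sqrt (1 - \<kappa>\<^sup>2 * (sin t)\<^sup>2)))"

definition Pcub :: "real \<Rightarrow> real \<Rightarrow> real \<Rightarrow> real" where
  "Pcub h j2 z = -2 * z^3 + 2 * z^2 + 2 * h * z - j2\<^sup>2 / 2"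

definition I1 :: "real \<Rightarrow> real \<Rightarrow> real \<Rightarrow> real \<Rightarrow> real" where
  "I1 h j2 z2 z3 = sqrt 2 / (2 * pi) * integral {z2..z3} (\<lambda>z. sqrt (Pcub h j2 z) / z)"

end

theory Submission imports Defs begin

lemma dF:
  fixes k x :: real assumes kp: "1 - k*(sin x)^2 > 0"
  shows "((\<lambda>t. sin t * cos t * sqrt (1 - k*(sin t)^2)) has_real_derivative
    ((1 - (2+2*k)*(sin x)^2 + 3*k*((sin x)^2)^2) / sqrt (1 - k*(sin x)^2))) (at x)"
proof -
  have d1: "((\<lambda>t. 1 - k*(sin t)^2) has_real_derivative (- (k * (2 * sin x * cos x)))) (at x)"
    by (auto intro!: derivative_eq_intros)
  have d2: "((\<lambda>t. sqrt (1 - k*(sin t)^2)) has_real_derivative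
      (inverse (sqrt (1 - k*(sin x)^2)) / 2 * (- (k * (2 * sin x * cos x))))) (at x)"
    by (rule DERIV_chain2[OF DERIV_real_sqrt[OF kp] d1])
  have d3: "((\<lambda>t. sin t * cos t) has_real_derivative (cos x * cos x - sin x * sin x)) (at x)"
    by (auto intro!: derivative_eq_intros)
  note d4 = DERIV_mult[OF d3 d2]
  define Dl where "Dl = sqrt (1 - k*(sin x)^2)"
  have Dlp: "Dl > 0" unfolding Dl_def using kp by simp
  have Dl2: "Dl * Dl = 1 - k*(sin x)^2" unfolding Dl_def using kp by simp
  have c2: "cos x * cos x = 1 - (sin x)^2" by (simp add: cos_squared_eq power2_eq_square[symmetric])
  have "(cos x * cos x - sin x * sin x) * Dl + (inverse Dl / 2 * (- (k * (2 * sin x * cos x)))) * (sin x * cos x)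
     = ((cos x * cos x - sin x * sin x) * (Dl*Dl) - k * (sin x)^2 * (cos x * cos x)) / Dl"
    using Dlp by (simp add: field_simps power2_eq_square)
  also have "\<dots> = (1 - (2+2*k)*(sin x)^2 + 3*k*((sin x)^2)^2) / Dl"
    unfolding Dl2 c2 by (simp add: algebra_simps power2_eq_square)
  finally have eq: "(cos x * cos x - sin x * sin x) * Dl + (inverse Dl / 2 * (- (k * (2 * sin x * cos x)))) * (sin x * cos x)
     = (1 - (2+2*k)*(sin x)^2 + 3*k*((sin x)^2)^2) / Dl" .
  show ?thesis using d4 eq unfolding Dl_def by simp
qed

lemma sum4: "(S::real)*(A+B+C+D)/Dl = S*A/Dl + S*B/Dl + S*C/Dl + S*D/Dl"
  by (simp add: ring_distribs add_divide_distrib)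

lemma key_alg:
  fixes a b z1 z2 z3 h j2 u S Dl :: real
  assumes Dl: "Dl > 0" "Dl^2 = 1 - a/b*u" and S: "S > 0" "S^2 = b"
    and pos: "z3 - a*u > 0" "z3 > 0" "b > 0"
    and ab: "a = z3 - z2" "b = z3 - z1"
    and v: "z1 + z2 + z3 = 1" "h = -(z1*z2+z1*z3+z2*z3)" "j2\<^sup>2 = -4*z1*z2*z3"
  shows "4*a^2*u*(1-u)*S*Dl/(z3*(1 - a/z3*u)) =
     (4 * (2 * h + z1) / (3 * S)) * (1/Dl) + (4 * S / 3) * Dl
   + (- (j2\<^sup>2) / (z3 * S)) * (1 / ((1 - a/z3*u) * Dl))
   + (-4*a*S/3) * ((1 - (2+2*(a/b))*u + 3*(a/b)*u^2)/Dl)"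
proof -
  have e1: "z3*(1 - a/z3*u) = z3 - a*u" using pos by (simp add: field_simps)
  have e2: "1 - a/z3*u = (z3 - a*u)/z3" using pos by (simp add: field_simps)
  have X: "4*a^2*u*(1-u)*S*Dl/(z3 - a*u) = 4*a^2*u*(1-u)*S*(1 - a/b*u)/((z3 - a*u)*Dl)"
  proof -
    have "4*a^2*u*(1-u)*S*Dl/(z3 - a*u) = 4*a^2*u*(1-u)*S*(Dl*Dl)/((z3 - a*u)*Dl)"
      using Dl pos by (simp add: field_simps)
    also have "Dl*Dl = 1 - a/b*u" using Dl(2) by (simp add: power2_eq_square)
    finally show ?thesis .
  qed
  have Y: "4*a^2*u*(1-u)*(1 - a/b*u)/(z3 - a*u) =
       (4 * (2 * h + z1) / (3 * b)) + (4 / 3) * (1 - a/b*u)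
   + (- (j2\<^sup>2) / (b*(z3 - a*u)))
   + (-4*a/3) * ((1 - (2+2*(a/b))*u + 3*(a/b)*u^2))"
  proof -
    have z3: "z3 = 1 - z1 - z2" using v by simp
    have poly: "3*(4*a^2*u*(1-u)*(b - a*u)) = 4*(2*h+z1)*(z3-a*u) + 4*(b-a*u)*(z3-a*u) - 3*j2\<^sup>2
       + (-4*a)*(b - (2*b+2*a)*u + 3*a*u^2)*(z3-a*u)"
      unfolding v(3) v(2) ab(1) ab(2) unfolding z3
      by (simp add: algebra_simps power2_eq_square power3_eq_cube)
    have L: "4*a^2*u*(1-u)*(1 - a/b*u)/(z3 - a*u) = 3*(4*a^2*u*(1-u)*(b - a*u)) / (3*b*(z3-a*u))"
      using pos by (simp add: field_simps)
    have R: "(4 * (2 * h + z1) / (3 * b)) + (4 / 3) * (1 - a/b*u)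
   + (- (j2\<^sup>2) / (b*(z3 - a*u)))
   + (-4*a/3) * ((1 - (2+2*(a/b))*u + 3*(a/b)*u^2)) = (4*(2*h+z1)*(z3-a*u) + 4*(b-a*u)*(z3-a*u) - 3*j2\<^sup>2
       + (-4*a)*(b - (2*b+2*a)*u + 3*a*u^2)*(z3-a*u)) / (3*b*(z3-a*u))"
      using pos by (simp add: field_simps)
    show ?thesis unfolding L R poly ..
  qed
  have T: "(4 * (2 * h + z1) / (3 * S)) * (1/Dl) + (4 * S / 3) * Dl
   + (- (j2\<^sup>2) / (z3 * S)) * (1 / (((z3 - a*u)/z3) * Dl))
   + (-4*a*S/3) * ((1 - (2+2*(a/b))*u + 3*(a/b)*u^2)/Dl)
   = S * ((4 * (2 * h + z1) / (3 * b)) + (4 / 3) * (1 - a/b*u)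
   + (- (j2\<^sup>2) / (b*(z3 - a*u)))
   + (-4*a/3) * ((1 - (2+2*(a/b))*u + 3*(a/b)*u^2))) / Dl"
  proof -
    have Dl2: "Dl*Dl = 1 - a/(S*S)*u" using Dl S by (simp add: power2_eq_square)
    have bb: "b = S*S" using S by (simp add: power2_eq_square)
    have t1: "(4 * (2 * h + z1) / (3 * S)) * (1/Dl) = S * (4 * (2 * h + z1) / (3 * b)) / Dl"
      unfolding bb using S(1) Dl(1) by (simp add: field_simps)
    have t2: "(4 * S / 3) * Dl = S * ((4 / 3) * (1 - a/b*u)) / Dl"
    proof -
      have "(4 * S / 3) * Dl = (4 * S / 3) * (Dl*Dl) / Dl" using Dl(1) by simp
      also have "Dl*Dl = 1 - a/b*u" using Dl(2) by (simp add: power2_eq_square)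
      finally show ?thesis using Dl(1) pos(3) by (simp add: field_simps)
    qed
    have t3: "(- (j2\<^sup>2) / (z3 * S)) * (1 / (((z3 - a*u)/z3) * Dl)) = S * (- (j2\<^sup>2) / (b*(z3 - a*u))) / Dl"
      unfolding bb using S(1) Dl(1) pos(1,2) by (simp add: field_simps)
    have t4: "(-4*a*S/3) * ((1 - (2+2*(a/b))*u + 3*(a/b)*u^2)/Dl) = S * ((-4*a/3) * ((1 - (2+2*(a/b))*u + 3*(a/b)*u^2))) / Dl"
      by simp
    show ?thesis unfolding t1 t2 t3 t4 sum4 ..
  qed
  have "4*a^2*u*(1-u)*S*Dl/(z3*(1 - a/z3*u)) = S * (4*a^2*u*(1-u)*(1 - a/b*u)/(z3 - a*u)) / Dl"
    unfolding e1 X by simp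
  then show ?thesis unfolding Y e2 T .
qed

lemma vieta:
  fixes h j2 z1 z2 z3 :: real
  assumes "z1 < z2" and "z2 < z3"
    and p1: "Pcub h j2 z1 = 0" and p2: "Pcub h j2 z2 = 0" and p3: "Pcub h j2 z3 = 0"
  shows "z1 + z2 + z3 = 1" "h = -(z1*z2+z1*z3+z2*z3)" "j2\<^sup>2 = -4*z1*z2*z3"
proof -
  have q12: "-2*(z1^2+z1*z2+z2^2) + 2*(z1+z2) + 2*h = 0"
  proof -
    have "(z2-z1)*(-2*(z1^2+z1*z2+z2^2) + 2*(z1+z2) + 2*h) = Pcub h j2 z2 - Pcub h j2 z1"
      unfolding Pcub_def by (simp add: algebra_simps power2_eq_square power3_eq_cube)
    then show ?thesis using p1 p2 assms(1) by simp
  qed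
  have q13: "-2*(z1^2+z1*z3+z3^2) + 2*(z1+z3) + 2*h = 0"
  proof -
    have "(z3-z1)*(-2*(z1^2+z1*z3+z3^2) + 2*(z1+z3) + 2*h) = Pcub h j2 z3 - Pcub h j2 z1"
      unfolding Pcub_def by (simp add: algebra_simps power2_eq_square power3_eq_cube)
    then show ?thesis using p1 p3 assms by simp
  qed
  have "(z3-z2)*(-2*(z1+z2+z3) + 2) = 0"
    using q12 q13 by (simp add: algebra_simps power2_eq_square)
  then show s: "z1 + z2 + z3 = 1" using assms by simp
  then have z3: "z3 = 1 - z1 - z2" by simp
  show hh: "h = -(z1*z2+z1*z3+z2*z3)" using q12 unfolding z3 by (simp add: algebra_simps power2_eq_square)
  show "j2\<^sup>2 = -4*z1*z2*z3" using p1 unfolding Pcub_def hh z3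
    by (simp add: algebra_simps power2_eq_square power3_eq_cube)
qed

theorem lemma1:
  fixes h j2 z1 z2 z3 :: real
  assumes "j2 \<noteq> 0"
    and "z1 < z2" and "z2 < z3"
    and "Pcub h j2 z1 = 0" and "Pcub h j2 z2 = 0" and "Pcub h j2 z3 = 0"
  shows "2 * pi * I1 h j2 z2 z3 =
           (4 * (2 * h + z1) / (3 * sqrt (z3 - z1))) * ellK (sqrt ((z3 - z2) / (z3 - z1)))
         + (4 * sqrt (z3 - z1) / 3) * ellE (sqrt ((z3 - z2) / (z3 - z1)))
         + (- (j2\<^sup>2) / (z3 * sqrt (z3 - z1))) * ellPi ((z3 - z2) / z3) (sqrt ((z3 - z2) / (z3 - z1)))"
proof -
  note v = vieta[OF assms(2-6)]
  have j2p: "j2\<^sup>2 > 0" using assms(1) by simp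
  have prodneg: "z1*z2*z3 < 0" using v(3) j2p by simp
  have z1n: "z1 < 0"
  proof (rule ccontr)
    assume "\<not> z1 < 0"
    then have "z1 \<ge> 0" by simp
    then have "z1*z2*z3 \<ge> 0" using assms(2,3) by simp
    then show False using prodneg by simp
  qed
  have z2p: "z2 > 0"
  proof (rule ccontr)
    assume "\<not> z2 > 0"
    then have "z2 \<le> 0" by simp
    moreover have "z3 > 0" using v(1) z1n \<open>z2 \<le> 0\<close> by simp
    moreover have "z1*z2 \<ge> 0" using z1n \<open>z2 \<le> 0\<close> by (simp add: zero_le_mult_iff)
    ultimately have "z1*z2*z3 \<ge> 0" by simp
    then show False using prodneg by simp
  qed
  have z3p: "z3 > 0" using z2p assms(3) by simp
  define a where "a = z3 - z2"
  define b where "b = z3 - z1"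
  have ap: "a > 0" and bp: "b > 0" and ab: "a < b" and az3: "a < z3"
    using assms(2,3) z2p unfolding a_def b_def by auto
  define k2 where "k2 = (z3 - z2) / (z3 - z1)"
  have k2ab: "k2 = a / b" unfolding k2_def a_def b_def ..
  have k2p: "0 < k2" "k2 < 1" using ap bp ab unfolding k2ab by auto
  have sqk: "(sqrt k2)\<^sup>2 = k2" using k2p by simp
  define n where "n = (z3 - z2) / z3"
  have nl: "n < 1" "0 < n" using az3 ap z3p unfolding n_def a_def[symmetric] by auto
  have Dpos: "1 - k2 * (sin t)\<^sup>2 > 0" for t
  proof -
    have "(sin t)\<^sup>2 \<le> 1" by (simp add: abs_square_le_1)
    then show ?thesis using mult_left_le[of "(sin t)\<^sup>2" k2] k2p by linarith
  qed
  have Npos: "1 - n * (sin t)\<^sup>2 > 0" for t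
  proof -
    have "(sin t)\<^sup>2 \<le> 1" by (simp add: abs_square_le_1)
    then show ?thesis using mult_left_le[of "(sin t)\<^sup>2" n] nl by linarith
  qed
  have Pfac: "Pcub h j2 z = 2*(z-z1)*(z-z2)*(z3-z)" for z
  proof -
    have z3: "z3 = 1 - z1 - z2" using v by simp
    show ?thesis unfolding Pcub_def v(3) v(2) unfolding z3
      by (simp add: field_simps power2_eq_square power3_eq_cube)
  qed
  define f where "f = (\<lambda>z. sqrt (Pcub h j2 z) / z)"
  define g where "g = (\<lambda>t::real. z3 - a * (sin t)\<^sup>2)"
  define g' where "g' = (\<lambda>t::real. - (2 * a * sin t * cos t))"
  have sub: "((\<lambda>t. g' t *\<^sub>R f (g t)) has_integral
      (integral {g 0..g (pi/2)} f - integral {g (pi/2)..g 0} f)) {0..pi/2}"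
  proof (rule has_integral_substitution_general[of "{}"])
    show "g ` {0..pi/2} \<subseteq> {z2..z3}"
    proof
      fix x assume "x \<in> g ` {0..pi/2}"
      then obtain t where x: "x = g t" by auto
      have "(sin t)\<^sup>2 \<le> 1" by (simp add: abs_square_le_1)
      then have "a * (sin t)\<^sup>2 \<le> a" using mult_left_le[of "(sin t)\<^sup>2" a] ap by linarith
      moreover have "a * (sin t)\<^sup>2 \<ge> 0" using ap by simp
      ultimately show "x \<in> {z2..z3}" unfolding x g_def a_def by auto
    qed
    show "continuous_on {z2..z3} f" unfolding f_def Pcub_def
      using z2p by (auto intro!: continuous_intros)
    show "continuous_on {0..pi/2} g" unfolding g_def by (auto intro!: continuous_intros)
    fix x assume "x \<in> {0..pi/2} - {}"
    show "(g has_field_derivative g' x) (at x within {0..pi/2})"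
      unfolding g_def g'_def by (auto intro!: derivative_eq_intros simp: power2_eq_square)
  qed auto
  have g0: "g 0 = z3" and g1: "g (pi/2) = z2" unfolding g_def a_def by auto
  have "((\<lambda>t. g' t * f (g t)) has_integral - integral {z2..z3} f) {0..pi/2}"
    using sub unfolding g0 g1 using assms(3) by simp
  from has_integral_neg[OF this]
  have sub2: "((\<lambda>t. - (g' t * f (g t))) has_integral integral {z2..z3} f) {0..pi/2}" by simp

  have z3ne: "z3 - a * (sin t)\<^sup>2 > 0" for t
  proof -
    have "(sin t)\<^sup>2 \<le> 1" by (simp add: abs_square_le_1)
    then show ?thesis using mult_left_le[of "(sin t)\<^sup>2" a] ap az3 by linarith
  qed
  have Dpos': "1 - a/b * (sin t)\<^sup>2 > 0" for t using Dpos[of t] unfolding k2ab .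
  have Dne: "1 - a/b * (sin t)\<^sup>2 \<noteq> 0" for t using Dpos'[of t] by linarith
  have Npos': "1 - a/z3 * (sin t)\<^sup>2 > 0" for t using Npos[of t] unfolding n_def a_def .
  have Nne: "1 - a/z3 * (sin t)\<^sup>2 \<noteq> 0" for t using Npos'[of t] by linarith
  define S where "S = sqrt b"
  have Sp: "S > 0" "S^2 = b" unfolding S_def using bp by auto
  define G1 where "G1 = 4 * (2 * h + z1) / (3 * S)"
  define G2 where "G2 = 4 * S / 3"
  define G3 where "G3 = - (j2\<^sup>2) / (z3 * S)"
  define DD where "DD = -4*a*S/3"
  define R where "R = (\<lambda>t. G1 * (1 / sqrt (1 - a/b * (sin t)\<^sup>2)) + G2 * sqrt (1 - a/b * (sin t)\<^sup>2)
     + G3 * (1 / ((1 - a/z3 * (sin t)\<^sup>2) * sqrt (1 - a/b * (sin t)\<^sup>2)))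
     + DD * ((1 - (2+2*(a/b))*(sin t)\<^sup>2 + 3*(a/b)*((sin t)\<^sup>2)^2) / sqrt (1 - a/b * (sin t)\<^sup>2)))"
  have pw: "sqrt 2 * (- (g' t * f (g t))) = R t" if t: "t \<in> {0..pi/2}" for t
  proof -
    have sp: "sin t \<ge> 0" using t by (auto intro!: sin_ge_zero)
    have cp: "cos t \<ge> 0" using t by (auto intro!: cos_ge_zero)
    define u where "u = (sin t)\<^sup>2"
    define Dl where "Dl = sqrt (1 - a/b * u)"
    have Dlp: "Dl > 0" "Dl^2 = 1 - a/b*u" unfolding Dl_def u_def using Dpos'[of t] by auto
    have c2: "(cos t)\<^sup>2 = 1 - u" unfolding u_def by (simp add: cos_squared_eq)
    have gt: "g t = z3 - a * u" unfolding g_def u_def ..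
    have z1e: "z1 = z3 - b" and z2e: "z2 = z3 - a" unfolding a_def b_def by auto
    have "(sqrt 2 * a * sin t * cos t * S * Dl)^2 = 2 * a^2 * (sin t)^2 * (cos t)^2 * S^2 * Dl^2"
      by (simp add: power_mult_distrib)
    also have "\<dots> = 2 * a^2 * u * (1 - u) * b * (1 - a/b*u)"
      unfolding Dlp(2) Sp(2) c2 u_def by simp
    also have "\<dots> = Pcub h j2 (g t)"
      unfolding Pfac gt z1e z2e using bp by (simp add: field_simps power2_eq_square)
    finally have Pg: "Pcub h j2 (g t) = (sqrt 2 * a * sin t * cos t * S * Dl)^2" ..
    have sqP: "sqrt (Pcub h j2 (g t)) = sqrt 2 * a * sin t * cos t * S * Dl"
      unfolding Pg using sp cp ap Sp(1) Dlp(1) by simp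
    have "sqrt 2 * (- (g' t * f (g t))) = (sqrt 2 * sqrt 2) * (2 * a^2 * (sin t * sin t) * (cos t * cos t) * S * Dl) / (z3 - a*u)"
      unfolding g'_def f_def gt sqP[unfolded gt] by (simp add: field_simps power2_eq_square)
    also have "\<dots> = 4*a^2*u*(1-u)*S*Dl/(z3*(1 - a/z3*u))"
    proof -
      have "sin t * sin t = u" "cos t * cos t = 1 - u" using c2 unfolding u_def by (simp_all add: power2_eq_square)
      moreover have "z3*(1 - a/z3*u) = z3 - a*u" using z3p by (simp add: field_simps)
      ultimately show ?thesis by simp
    qed
    also have "\<dots> = R t"
      unfolding R_def G1_def G2_def G3_def DD_def u_def[symmetric] Dl_def[symmetric]
      by (rule key_alg[OF Dlp Sp _ z3p bp a_def b_def v]) (use z3ne[of t] in \<open>simp add: u_def\<close>)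
    finally show ?thesis .
  qed

  have Bne: "b \<noteq> a * (sin t)\<^sup>2" for t using Dpos'[of t] bp by (auto simp: field_simps)
  have Zne: "z3 \<noteq> a * (sin t)\<^sup>2" for t using z3ne[of t] by simp
  have bne: "b \<noteq> 0" using bp by simp
  have z3ne0: "z3 \<noteq> 0" using z3p by simp
  have sqk': "(sqrt (a/b))\<^sup>2 = a/b" using ap bp by simp
  have hK: "((\<lambda>t. 1 / sqrt (1 - a/b * (sin t)\<^sup>2)) has_integral ellK (sqrt (a/b))) {0..pi/2}"
    unfolding ellK_def sqk'
    using bp z3p by (intro integrable_integral[OF integrable_continuous_interval])
       (auto intro!: continuous_intros simp: Dne Bne bne)
  have hE: "((\<lambda>t. sqrt (1 - a/b * (sin t)\<^sup>2)) has_integral ellE (sqrt (a/b))) {0..pi/2}"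
    unfolding ellE_def sqk'
    using bp z3p by (intro integrable_integral[OF integrable_continuous_interval])
       (auto intro!: continuous_intros)
  have hP: "((\<lambda>t. 1 / ((1 - a/z3 * (sin t)\<^sup>2) * sqrt (1 - a/b * (sin t)\<^sup>2))) has_integral ellPi (a/z3) (sqrt (a/b))) {0..pi/2}"
    unfolding ellPi_def sqk'
    using bp z3p by (intro integrable_integral[OF integrable_continuous_interval])
       (auto intro!: continuous_intros simp: Dne Nne Bne Zne bne z3ne0)
  have hF: "((\<lambda>t. (1 - (2+2*(a/b))*(sin t)\<^sup>2 + 3*(a/b)*((sin t)\<^sup>2)^2) / sqrt (1 - a/b * (sin t)\<^sup>2))
      has_integral 0) {0..pi/2}"
  proof -
    have "((\<lambda>t. (1 - (2+2*(a/b))*(sin t)\<^sup>2 + 3*(a/b)*((sin t)\<^sup>2)^2) / sqrt (1 - a/b * (sin t)\<^sup>2))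
      has_integral ((\<lambda>t. sin t * cos t * sqrt (1 - (a/b)*(sin t)^2)) (pi/2)
                  - (\<lambda>t. sin t * cos t * sqrt (1 - (a/b)*(sin t)^2)) 0)) {0..pi/2}"
      by (rule fundamental_theorem_of_calculus)
         (simp, rule has_vector_derivative_at_within, rule dF[unfolded has_real_derivative_iff_has_vector_derivative], rule Dpos')
    then show ?thesis by simp
  qed
  have hR: "(R has_integral (G1 * ellK (sqrt (a/b)) + G2 * ellE (sqrt (a/b)) + G3 * ellPi (a/z3) (sqrt (a/b)) + DD * 0)) {0..pi/2}"
    unfolding R_def
    by (intro has_integral_add has_integral_mult_right hK hE hP hF)
  have "2 * pi * I1 h j2 z2 z3 = sqrt 2 * integral {z2..z3} f"
    unfolding I1_def f_def by simp
  also have "\<dots> = sqrt 2 * integral {0..pi/2} (\<lambda>t. - (g' t * f (g t)))"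
    using integral_unique[OF sub2] by simp
  also have "\<dots> = integral {0..pi/2} (\<lambda>t. sqrt 2 * (- (g' t * f (g t))))"
    by (simp add: integral_mult_right)
  also have "\<dots> = integral {0..pi/2} R"
    by (rule integral_cong) (rule pw)
  also have "\<dots> = G1 * ellK (sqrt (a/b)) + G2 * ellE (sqrt (a/b)) + G3 * ellPi (a/z3) (sqrt (a/b))"
    using integral_unique[OF hR] by simp
  finally show ?thesis
    unfolding G1_def G2_def G3_def S_def a_def b_def .
qed

end
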